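(* Let $\hat{\mathcal D}$ be a marked DAG over $X$, $\kappa>0$, $q\in\mathcal Q_{\mathcal D}$, $c\in\mathbb R_+^X$, $p=\mathcal A(q,c)$ and $P=\Lambda(p)$. Then for every unit flow $F\in\mathcal F_{\mathcal D}$, $$\mathbb D(F\,\|\,p)-\mathbb D(F\,\|\,q)\le\sum_{x\in X}c_x(F_x-P_x).$$
   Context: Let $X$ be a finite set. A DAG over $X$ is a finite directed acyclic graph $\mathcal D=(V,A)$ with $X\subseteq V$, a single source $r$, whose set of sinks is exactly $X$. A flow is $F\in\mathbb R_+^A$ with $\sum_{v:uv\in A}F_{uv}=\sum_{v:vu\in A}F_{vu}$ for $u\in V\setminus(X\cup\{r\})$; $F_u:=\sum_{v:uv\in A}F_{uv}$ for $u\notin X$, $F_x:=\sum_{u:ux\in A}F_{ux}$ for $x\in X$; unit flows have $F_r=1$ and form $\mathcal F_{\mathcal D}$. A marked DAG is $(\mathcal D,\omega,\theta)$ with $\omega\in\mathbb R_{>0}^A$, $\omega_{uv}>\omega_{vw}$ whenever $uv,vw\in A$, and $\theta\in\mathbb R_{>0}^A$ with $\sum_{v:uv\in A}\theta_{uv}=1$ for $u\in V\setminus X$. Put $\eta_{uv}:=1+\log(1/\theta_{uv})$, $\delta_{uv}:=\theta_{uv}/\eta_{uv}$. $\mathcal Q_{\mathcal D}:=\{p\in\mathbb R_+^A:\sum_{v:uv\in A}p_{uv}=1\ \forall u\in V\setminus X\}$; $q^{(u)}:=(q_{uv})_{v:uv\in A}$; $\mathcal Q^{(u)}$ is the probability simplex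 on $\{v:uv\in A\}$; $\mathbb D^{(u)}(p\|p'):=\frac1\kappa\sum_{v:uv\in A}\frac{\omega_{uv}}{\eta_{uv}}\big[(p_v+\delta_{uv})\log\frac{p_v+\delta_{uv}}{p'_v+\delta_{uv}}+p'_v-p_v\big]$. The step map $\mathcal A(q,c)$ outputs $p\in\mathcal Q_{\mathcal D}$: set $\hat c_x:=c_x$ for $x\in X$; process $u\in V\setminus X$ so that each vertex comes after all its out-neighbours, setting $p^{(u)}:=\arg\min_{p'\in\mathcal Q^{(u)}}\{\mathbb D^{(u)}(p'\|q^{(u)})+\sum_vp'_v\hat c_v\}$ and $\hat c_u:=\sum_vp^{(u)}_v\hat c_v$. $\Lambda(q)$ is the unique unit flow $F$ with $F_{uv}=F_uq_{uv}$ for all $uv\in A$. Global divergence: for $F\in\mathcal F_{\mathcal D}$, $q\in\mathcal Q_{\mathcal D}$, $\mathbb D(F\|q):=\frac1\kappa\sum_{uv\in A}\frac{\omega_{uv}}{\eta_{uv}}\big[(F_{uv}+F_u\delta_{uv})\log\frac{F_{uv}/F_u+\delta_{uv}}{q_{uv}+\delta_{uv}}+F_uq_{uv}-F_{uv}\big]$, with terms having $F_u=0$ interpreted as $0$. *)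

theory Defs
  imports Complex_Main
begin

definition dag :: "'v set \<Rightarrow> ('v \<times> 'v) set \<Rightarrow> 'v set \<Rightarrow> 'v \<Rightarrow> bool" where
  "dag V A X r \<longleftrightarrow> finite V \<and> A \<subseteq> V \<times> V \<and> acyclic A \<and> X \<subseteq> V \<and> r \<in> V \<and>
     {v \<in> V. \<forall>u. (u, v) \<notin> A} = {r} \<and>
     {u \<in> V. \<forall>v. (u, v) \<notin> A} = X"

definition outsum :: "('v \<times> 'v) set \<Rightarrow> ('v \<times> 'v \<Rightarrow> real) \<Rightarrow> 'v \<Rightarrow> real" where
  "outsum A F u = (\<Sum>v\<in>{v. (u, v) \<in> A}. F (u, v))"

definition insum :: "('v \<times> 'v) set \<Rightarrow> ('v \<times> 'v \<Rightarrow> real) \<Rightarrow> 'v \<Rightarrow> real" where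
  "insum A F u = (\<Sum>v\<in>{v. (v, u) \<in> A}. F (v, u))"

definition flow_val :: "('v \<times> 'v) set \<Rightarrow> 'v set \<Rightarrow> ('v \<times> 'v \<Rightarrow> real) \<Rightarrow> 'v \<Rightarrow> real" where
  "flow_val A X F u = (if u \<in> X then insum A F u else outsum A F u)"

definition is_flow :: "'v set \<Rightarrow> ('v \<times> 'v) set \<Rightarrow> 'v set \<Rightarrow> 'v \<Rightarrow> ('v \<times> 'v \<Rightarrow> real) \<Rightarrow> bool" where
  "is_flow V A X r F \<longleftrightarrow> (\<forall>e\<in>A. 0 \<le> F e) \<and>
     (\<forall>u \<in> V - (X \<union> {r}). outsum A F u = insum A F u)"

definition unit_flow :: "'v set \<Rightarrow> ('v \<times> 'v) set \<Rightarrow> 'v set \<Rightarrow> 'v \<Rightarrow> ('v \<times> 'v \<Rightarrow> real) \<Rightarrow> bool" where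
  "unit_flow V A X r F \<longleftrightarrow> is_flow V A X r F \<and> flow_val A X F r = 1"

definition marked :: "'v set \<Rightarrow> ('v \<times> 'v) set \<Rightarrow> 'v set \<Rightarrow> ('v \<times> 'v \<Rightarrow> real) \<Rightarrow> ('v \<times> 'v \<Rightarrow> real) \<Rightarrow> bool" where
  "marked V A X \<omega> \<theta> \<longleftrightarrow> (\<forall>e\<in>A. 0 < \<omega> e) \<and>
     (\<forall>u v w. (u, v) \<in> A \<longrightarrow> (v, w) \<in> A \<longrightarrow> \<omega> (u, v) > \<omega> (v, w)) \<and>
     (\<forall>e\<in>A. 0 < \<theta> e) \<and> (\<forall>u \<in> V - X. outsum A \<theta> u = 1)"

definition eta :: "('v \<times> 'v \<Rightarrow> real) \<Rightarrow> 'v \<times> 'v \<Rightarrow> real" where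
  "eta \<theta> e = 1 + ln (1 / \<theta> e)"

definition dlt :: "('v \<times> 'v \<Rightarrow> real) \<Rightarrow> 'v \<times> 'v \<Rightarrow> real" where
  "dlt \<theta> e = \<theta> e / eta \<theta> e"

definition in_Q :: "'v set \<Rightarrow> ('v \<times> 'v) set \<Rightarrow> 'v set \<Rightarrow> ('v \<times> 'v \<Rightarrow> real) \<Rightarrow> bool" where
  "in_Q V A X p \<longleftrightarrow> (\<forall>e\<in>A. 0 \<le> p e) \<and> (\<forall>u \<in> V - X. outsum A p u = 1)"

text \<open>The simplex Q^(u) on the out-neighbours of u (values off the out-neighbours are irrelevant).\<close>
definition simplex_at :: "('v \<times> 'v) set \<Rightarrow> 'v \<Rightarrow> ('v \<Rightarrow> real) set" where
  "simplex_at A u = {p'. (\<forall>v. (u, v) \<in> A \<longrightarrow> 0 \<le> p' v) \<and> (\<Sum>v\<in>{v. (u, v) \<in> A}. p' v) = 1}"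

definition local_div :: "('v \<times> 'v) set \<Rightarrow> ('v \<times> 'v \<Rightarrow> real) \<Rightarrow> ('v \<times> 'v \<Rightarrow> real) \<Rightarrow> real
     \<Rightarrow> 'v \<Rightarrow> ('v \<Rightarrow> real) \<Rightarrow> ('v \<Rightarrow> real) \<Rightarrow> real" where
  "local_div A \<omega> \<theta> \<kappa> u p p' = (1 / \<kappa>) * (\<Sum>v\<in>{v. (u, v) \<in> A}.
     \<omega> (u, v) / eta \<theta> (u, v) *
       ((p v + dlt \<theta> (u, v)) * ln ((p v + dlt \<theta> (u, v)) / (p' v + dlt \<theta> (u, v))) + p' v - p v))"

text \<open>p is the output of the step map A(q,c): there are values c-hat, equal to c on X,
  such that at every non-sink u, p^(u) is the minimiser over Q^(u) of
  D^(u)(. || q^(u)) + <., c-hat>, and c-hat_u = sum_v p_uv c-hat_v.\<close>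
definition step_output :: "'v set \<Rightarrow> ('v \<times> 'v) set \<Rightarrow> 'v set \<Rightarrow> ('v \<times> 'v \<Rightarrow> real) \<Rightarrow> ('v \<times> 'v \<Rightarrow> real)
     \<Rightarrow> real \<Rightarrow> ('v \<times> 'v \<Rightarrow> real) \<Rightarrow> ('v \<Rightarrow> real) \<Rightarrow> ('v \<times> 'v \<Rightarrow> real) \<Rightarrow> bool" where
  "step_output V A X \<omega> \<theta> \<kappa> q c p \<longleftrightarrow> in_Q V A X p \<and>
     (\<exists>ch :: 'v \<Rightarrow> real. (\<forall>x\<in>X. ch x = c x) \<and>
        (\<forall>u \<in> V - X.
           (\<lambda>v. p (u, v)) \<in> simplex_at A u \<and>
           (\<forall>p' \<in> simplex_at A u.
              local_div A \<omega> \<theta> \<kappa> u (\<lambda>v. p (u, v)) (\<lambda>v. q (u, v))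
                + (\<Sum>v\<in>{v. (u, v) \<in> A}. p (u, v) * ch v)
              \<le> local_div A \<omega> \<theta> \<kappa> u p' (\<lambda>v. q (u, v))
                + (\<Sum>v\<in>{v. (u, v) \<in> A}. p' v * ch v)) \<and>
           ch u = (\<Sum>v\<in>{v. (u, v) \<in> A}. p (u, v) * ch v)))"

definition is_Lambda :: "'v set \<Rightarrow> ('v \<times> 'v) set \<Rightarrow> 'v set \<Rightarrow> 'v \<Rightarrow> ('v \<times> 'v \<Rightarrow> real)
     \<Rightarrow> ('v \<times> 'v \<Rightarrow> real) \<Rightarrow> bool" where
  "is_Lambda V A X r p P \<longleftrightarrow> unit_flow V A X r P \<and>
     (\<forall>u v. (u, v) \<in> A \<longrightarrow> P (u, v) = flow_val A X P u * p (u, v))"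

definition glob_div :: "('v \<times> 'v) set \<Rightarrow> 'v set \<Rightarrow> ('v \<times> 'v \<Rightarrow> real) \<Rightarrow> ('v \<times> 'v \<Rightarrow> real) \<Rightarrow> real
     \<Rightarrow> ('v \<times> 'v \<Rightarrow> real) \<Rightarrow> ('v \<times> 'v \<Rightarrow> real) \<Rightarrow> real" where
  "glob_div A X \<omega> \<theta> \<kappa> F q = (1 / \<kappa>) * (\<Sum>e\<in>A.
     (let Fu = flow_val A X F (fst e) in
      if Fu = 0 then 0 else
        \<omega> e / eta \<theta> e *
          ((F e + Fu * dlt \<theta> e) * ln ((F e / Fu + dlt \<theta> e) / (q e + dlt \<theta> e))
           + Fu * q e - F e)))"

end

theory Submission imports Defs begin
lemma term_deriv:
  fixes p0 b d q w :: real
  assumes "p0 + d > 0" "q + d > 0"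
  shows "((\<lambda>t. w * ((p0 + t*b + d) * ln ((p0 + t*b + d)/(q + d)) + q - (p0 + t*b)))
     has_real_derivative (b * (w * ln ((p0+d)/(q+d))))) (at 0)"
proof -
  have "((\<lambda>t. w * ((p0 + t*b + d) * ln ((p0 + t*b + d)/(q + d)) + q - (p0 + t*b)))
     has_real_derivative (w * ((0*b + 1*b + 0) * ln ((p0 + 0*b + d)/(q + d)) + (p0 + 0*b + d) * ((0*b+1*b+0) / (q+d) / ((p0 + 0*b + d)/(q + d))) + 0 - (0 + (0*b+1*b)))))
     (at 0)"
    using assms by (auto intro!: derivative_eq_intros)
  moreover have "w * ((0*b + 1*b + 0) * ln ((p0 + 0*b + d)/(q + d)) + (p0 + 0*b + d) * ((0*b+1*b+0) / (q+d) / ((p0 + 0*b + d)/(q + d))) + 0 - (0 + (0*b+1*b))) = b * (w * ln ((p0+d)/(q+d)))"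
  proof -
    have ne: "p0 + d \<noteq> 0" "q + d \<noteq> 0" using assms by auto
    have "b / (q+d) / ((p0 + d)/(q + d)) = b / (p0 + d)" using ne by simp
    hence "(p0 + d) * (b / (q+d) / ((p0 + d)/(q + d))) = b" using ne by simp
    thus ?thesis by simp
  qed
  ultimately show ?thesis using assms by (simp add: algebra_simps)
qed

lemma local_bound:
  fixes S :: "'v set" and W D P Q f ch :: "'v \<Rightarrow> real" and \<kappa> :: real
  assumes fin: "finite S" and kp: "\<kappa> > 0"
    and W: "\<forall>v\<in>S. W v > 0" and D: "\<forall>v\<in>S. D v > 0"
    and P0: "\<forall>v\<in>S. P v \<ge> 0" and Q0: "\<forall>v\<in>S. Q v \<ge> 0" and f0: "\<forall>v\<in>S. f v \<ge> 0"
    and Ps: "sum P S = 1" and fs: "sum f S = 1"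
    and min: "\<forall>x. (\<forall>v\<in>S. 0 \<le> x v) \<longrightarrow> sum x S = 1 \<longrightarrow>
        (1/\<kappa>) * (\<Sum>v\<in>S. W v * ((P v + D v) * ln ((P v + D v) / (Q v + D v)) + Q v - P v)) + (\<Sum>v\<in>S. P v * ch v)
        \<le> (1/\<kappa>) * (\<Sum>v\<in>S. W v * ((x v + D v) * ln ((x v + D v) / (Q v + D v)) + Q v - x v)) + (\<Sum>v\<in>S. x v * ch v)"
  shows "(1/\<kappa>) * (\<Sum>v\<in>S. W v * ((f v + D v) * ln ((Q v + D v) / (P v + D v)) + P v - Q v))
     \<le> (\<Sum>v\<in>S. f v * ch v) - (\<Sum>v\<in>S. P v * ch v)"
proof -
  define g where "g v = (1/\<kappa>) * W v * ln ((P v + D v)/(Q v + D v)) + ch v" for v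
  have foc: "(\<Sum>v\<in>S. (f v - P v) * g v) \<ge> 0"
  proof (rule ccontr)
    assume neg: "\<not> (\<Sum>v\<in>S. (f v - P v) * g v) \<ge> 0"
    define h where "h t = (1/\<kappa>) * (\<Sum>v\<in>S. W v * ((P v + t*(f v - P v) + D v) * ln ((P v + t*(f v - P v) + D v)/(Q v + D v)) + Q v - (P v + t*(f v - P v)))) + (\<Sum>v\<in>S. (P v + t*(f v - P v)) * ch v)" for t
    have der: "(h has_real_derivative (\<Sum>v\<in>S. (f v - P v) * g v)) (at 0)"
    proof -
      have d1: "((\<lambda>t. \<Sum>v\<in>S. W v * ((P v + t*(f v - P v) + D v) * ln ((P v + t*(f v - P v) + D v)/(Q v + D v)) + Q v - (P v + t*(f v - P v))))
          has_real_derivative (\<Sum>v\<in>S. (f v - P v) * (W v * ln ((P v+D v)/(Q v+D v))))) (at 0)"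
        apply (rule DERIV_sum)
        apply (rule term_deriv)
        using P0 Q0 D by (auto intro: add_nonneg_pos)
      have d2: "((\<lambda>t. \<Sum>v\<in>S. (P v + t*(f v - P v)) * ch v) has_real_derivative (\<Sum>v\<in>S. (f v - P v) * ch v)) (at 0)"
        by (rule DERIV_sum) (auto intro!: derivative_eq_intros)
      have "(h has_real_derivative ((1/\<kappa>) * (\<Sum>v\<in>S. (f v - P v) * (W v * ln ((P v+D v)/(Q v+D v)))) + (\<Sum>v\<in>S. (f v - P v) * ch v))) (at 0)"
        unfolding h_def[abs_def] by (rule DERIV_add[OF DERIV_cmult[OF d1] d2])
      moreover have "(1/\<kappa>) * (\<Sum>v\<in>S. (f v - P v) * (W v * ln ((P v+D v)/(Q v+D v)))) + (\<Sum>v\<in>S. (f v - P v) * ch v) = (\<Sum>v\<in>S. (f v - P v) * g v)"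
        unfolding sum_distrib_left sum.distrib[symmetric] g_def by (rule sum.cong) (auto simp: algebra_simps diff_divide_distrib)
      ultimately show ?thesis by simp
    qed
    obtain d where d: "d > 0" "\<forall>s>0. s < d \<longrightarrow> h 0 > h (0 + s)"
      using DERIV_neg_dec_right[OF der] neg by force
    define t where "t = min (d/2) 1"
    have t: "0 < t" "t < d" "t \<le> 1" using d by (auto simp: t_def)
    have lt: "h t < h 0" using d t by auto
    have nn: "\<forall>v\<in>S. 0 \<le> P v + t*(f v - P v)"
    proof
      fix v assume v: "v \<in> S"
      have "P v + t*(f v - P v) = (1-t) * P v + t * f v" by algebra
      also have "... \<ge> 0" using P0 f0 v t by (intro add_nonneg_nonneg mult_nonneg_nonneg) auto
      finally show "0 \<le> P v + t*(f v - P v)" .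
    qed
    have s1: "(\<Sum>v\<in>S. P v + t*(f v - P v)) = 1"
      using Ps fs by (simp add: sum.distrib sum_subtractf sum_distrib_left[symmetric])
    have "h 0 \<le> h t"
      using min[rule_format, of "\<lambda>v. P v + t*(f v - P v)"] nn s1 unfolding h_def by simp
    with lt show False by simp
  qed
  have dpq: "(\<Sum>v\<in>S. W v * ((P v + D v) * ln ((P v + D v) / (Q v + D v)) + Q v - P v)) \<ge> 0"
  proof (rule sum_nonneg)
    fix v assume v: "v \<in> S"
    define a where "a = P v + D v"
    define b where "b = Q v + D v"
    have a: "a > 0" and b: "b > 0" using P0 Q0 D v by (auto simp: a_def b_def intro: add_nonneg_pos)
    have "ln (b/a) \<le> b/a - 1" using a b by (intro ln_le_minus_one) auto
    hence "ln (a/b) \<ge> 1 - b/a" using a b by (simp add: ln_div)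
    hence "a * ln (a/b) \<ge> a * (1 - b/a)" using a by (simp add: mult_left_mono)
    moreover have "a * (1 - b/a) = a - b" using a by (simp add: field_simps)
    ultimately have "a * ln (a/b) + b - a \<ge> 0" by linarith
    thus "W v * ((P v + D v) * ln ((P v + D v) / (Q v + D v)) + Q v - P v) \<ge> 0"
      using W[rule_format, OF v] mult_nonneg_nonneg[of "W v" "a * ln (a/b) + b - a"] unfolding a_def b_def by (simp add: algebra_simps)
  qed
  have ident: "(\<Sum>v\<in>S. W v * ((f v + D v) * ln ((Q v + D v) / (P v + D v)) + P v - Q v))
     = - (\<Sum>v\<in>S. (f v - P v) * (W v * ln ((P v + D v)/(Q v + D v))))
       - (\<Sum>v\<in>S. W v * ((P v + D v) * ln ((P v + D v) / (Q v + D v)) + Q v - P v))"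
  proof -
    have "\<And>v. v \<in> S \<Longrightarrow> W v * ((f v + D v) * ln ((Q v + D v) / (P v + D v)) + P v - Q v)
       = - ((f v - P v) * (W v * ln ((P v + D v)/(Q v + D v))))
         - W v * ((P v + D v) * ln ((P v + D v) / (Q v + D v)) + Q v - P v)"
    proof -
      fix v assume v: "v \<in> S"
      have a: "P v + D v > 0" "Q v + D v > 0" using P0 Q0 D v by (auto intro: add_nonneg_pos)
      have "ln ((Q v + D v) / (P v + D v)) = - ln ((P v + D v)/(Q v + D v))"
        using a by (simp add: ln_div)
      thus "W v * ((f v + D v) * ln ((Q v + D v) / (P v + D v)) + P v - Q v)
       = - ((f v - P v) * (W v * ln ((P v + D v)/(Q v + D v))))
         - W v * ((P v + D v) * ln ((P v + D v) / (Q v + D v)) + Q v - P v)"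
        by (simp add: algebra_simps)
    qed
    thus ?thesis by (simp add: sum.distrib sum_subtractf sum_negf[symmetric] flip: sum_subtractf)
  qed
  have gs: "(\<Sum>v\<in>S. (f v - P v) * g v) = (1/\<kappa>) * (\<Sum>v\<in>S. (f v - P v) * (W v * ln ((P v + D v)/(Q v + D v)))) + ((\<Sum>v\<in>S. f v * ch v) - (\<Sum>v\<in>S. P v * ch v))"
    unfolding sum_distrib_left sum.distrib[symmetric] sum_subtractf[symmetric] g_def
    by (rule sum.cong) (auto simp: algebra_simps diff_divide_distrib)
  have "(1/\<kappa>) * (\<Sum>v\<in>S. W v * ((f v + D v) * ln ((Q v + D v) / (P v + D v)) + P v - Q v))
     = - (1/\<kappa>) * (\<Sum>v\<in>S. (f v - P v) * (W v * ln ((P v + D v)/(Q v + D v))))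
       - (1/\<kappa>) * (\<Sum>v\<in>S. W v * ((P v + D v) * ln ((P v + D v) / (Q v + D v)) + Q v - P v))"
    by (subst ident) (simp add: right_diff_distrib)
  moreover have "(1/\<kappa>) * (\<Sum>v\<in>S. W v * ((P v + D v) * ln ((P v + D v) / (Q v + D v)) + Q v - P v)) \<ge> 0"
    using dpq kp by simp
  ultimately show ?thesis using foc gs by linarith
qed

lemma dag_facts:
  assumes "dag V A X r"
  shows "finite V" "finite A" "A \<subseteq> V \<times> V" "\<And>x v. x \<in> X \<Longrightarrow> (x, v) \<notin> A"
    "\<And>u. (u, r) \<notin> A" "r \<in> V" "X \<subseteq> V" "\<And>u v. (u, v) \<in> A \<Longrightarrow> u \<in> V - X"
    "\<And>u. finite {v. (u, v) \<in> A}"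
proof -
  have d: "finite V" "A \<subseteq> V \<times> V" "X \<subseteq> V" "r \<in> V"
     "{v \<in> V. \<forall>u. (u, v) \<notin> A} = {r}" "{u \<in> V. \<forall>v. (u, v) \<notin> A} = X"
    using assms unfolding dag_def by auto
  show "finite V" "A \<subseteq> V \<times> V" "r \<in> V" "X \<subseteq> V" using d by auto
  show "finite A" using d(1,2) finite_subset by (metis finite_SigmaI)
  show "\<And>x v. x \<in> X \<Longrightarrow> (x, v) \<notin> A" using d(6) by blast
  show "\<And>u. (u, r) \<notin> A" using d(5) by blast
  show "\<And>u v. (u, v) \<in> A \<Longrightarrow> u \<in> V - X" using d(2,6) by blast
  show "\<And>u. finite {v. (u, v) \<in> A}"
    using d(1,2) by (metis (no_types, lifting) SigmaD2 finite_subset mem_Collect_eq subsetD subsetI)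
qed

lemma sum_A_out:
  assumes "dag V A X r"
  shows "sum g A = (\<Sum>u\<in>V-X. \<Sum>v\<in>{v. (u,v)\<in>A}. g (u,v))"
proof -
  note f = dag_facts[OF assms]
  have "A = Sigma (V-X) (\<lambda>u. {v. (u,v)\<in>A})" using f(8) by auto
  hence "sum g A = sum g (Sigma (V-X) (\<lambda>u. {v. (u,v)\<in>A}))" by simp
  also have "... = (\<Sum>u\<in>V-X. \<Sum>v\<in>{v. (u,v)\<in>A}. g (u,v))"
    using sum.Sigma[of "V-X" "\<lambda>u. {v. (u,v)\<in>A}" "\<lambda>u v. g (u,v)"] f(1,9) by auto
  finally show ?thesis .
qed

lemma sum_A_in:
  assumes "dag V A X r"
  shows "sum g A = (\<Sum>v\<in>V. \<Sum>u\<in>{u. (u,v)\<in>A}. g (u,v))"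
proof -
  note f = dag_facts[OF assms]
  have "sum g A = sum (\<lambda>(v,u). g (u,v)) (prod.swap ` A)"
    by (subst sum.reindex) (auto simp: comp_def case_prod_beta)
  also have "prod.swap ` A = Sigma V (\<lambda>v. {u. (u,v)\<in>A})" using f(3) by force
  also have "sum (\<lambda>(v,u). g (u,v)) (Sigma V (\<lambda>v. {u. (u,v)\<in>A})) = (\<Sum>v\<in>V. \<Sum>u\<in>{u. (u,v)\<in>A}. g (u,v))"
  proof (rule sum.Sigma[symmetric])
    show "finite V" by (rule f(1))
    show "\<forall>v\<in>V. finite {u. (u,v)\<in>A}"
    proof
      fix v have "{u. (u,v)\<in>A} \<subseteq> V" using f(3) by auto
      thus "finite {u. (u,v)\<in>A}" using f(1) finite_subset by blast
    qed
  qed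
  finally show ?thesis .
qed

lemma telescope:
  assumes dg: "dag V A X r" and uf: "unit_flow V A X r G" and chc: "\<forall>x\<in>X. ch x = c x"
  shows "(\<Sum>u\<in>V-X. (\<Sum>v\<in>{v. (u,v)\<in>A}. G (u,v) * ch v) - outsum A G u * ch u)
        = (\<Sum>x\<in>X. c x * insum A G x) - ch r"
proof -
  note f = dag_facts[OF dg]
  have ins_r: "insum A G r = 0" unfolding insum_def using f(5) by simp
  have rX: "r \<notin> X"
  proof
    assume "r \<in> X"
    hence "flow_val A X G r = 0" using ins_r by (simp add: flow_val_def)
    thus False using uf by (simp add: unit_flow_def)
  qed
  have out_r: "outsum A G r = 1" using uf rX by (simp add: unit_flow_def flow_val_def)
  have cons: "\<And>v. v \<in> V - X \<Longrightarrow> v \<noteq> r \<Longrightarrow> outsum A G v = insum A G v"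
    using uf unfolding unit_flow_def is_flow_def by auto
  have "(\<Sum>u\<in>V-X. \<Sum>v\<in>{v. (u,v)\<in>A}. G (u,v) * ch v) = (\<Sum>e\<in>A. G e * ch (snd e))"
    by (simp add: sum_A_out[OF dg])
  also have "... = (\<Sum>v\<in>V. insum A G v * ch v)"
    by (simp add: sum_A_in[OF dg] insum_def sum_distrib_right)
  also have "... = (\<Sum>v\<in>V-X. insum A G v * ch v) + (\<Sum>v\<in>X. insum A G v * ch v)"
    by (rule sum.subset_diff[OF f(7,1)])
  finally have e1: "(\<Sum>u\<in>V-X. \<Sum>v\<in>{v. (u,v)\<in>A}. G (u,v) * ch v) =
      (\<Sum>v\<in>V-X. insum A G v * ch v) + (\<Sum>v\<in>X. insum A G v * ch v)" .
  have "(\<Sum>v\<in>V-X. insum A G v * ch v - outsum A G v * ch v) = (\<Sum>v\<in>V-X. if v = r then - ch r else 0)"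
    by (rule sum.cong) (auto simp: ins_r out_r cons)
  also have "... = - ch r" using f(1,6) rX by simp
  finally have e2: "(\<Sum>v\<in>V-X. insum A G v * ch v - outsum A G v * ch v) = - ch r" .
  have e3: "(\<Sum>v\<in>X. insum A G v * ch v) = (\<Sum>x\<in>X. c x * insum A G x)"
    by (rule sum.cong) (auto simp: chc)
  show ?thesis using e1 e2 e3 by (simp add: sum_subtractf)
qed

lemma arc_alg:
  fixes Fu Fe d P Q w :: real
  assumes "Fu > 0" "Fe \<ge> 0" "d > 0" "P + d > 0" "Q + d > 0"
  shows "w*((Fe + Fu*d)*ln((Fe/Fu + d)/(P+d)) + Fu*P - Fe) - w*((Fe + Fu*d)*ln((Fe/Fu+d)/(Q+d)) + Fu*Q - Fe)
     = Fu*(w*((Fe/Fu + d)*ln((Q+d)/(P+d)) + P - Q))"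
proof -
  have a: "Fe/Fu + d > 0" using assms by (simp add: add_nonneg_pos)
  have l: "ln((Fe/Fu + d)/(P+d)) - ln((Fe/Fu+d)/(Q+d)) = ln((Q+d)/(P+d))"
    using a assms by (simp add: ln_div)
  have m: "Fe + Fu*d = Fu*(Fe/Fu + d)" using assms by (simp add: field_simps)
  have "w*((Fe + Fu*d)*ln((Fe/Fu + d)/(P+d)) + Fu*P - Fe) - w*((Fe + Fu*d)*ln((Fe/Fu+d)/(Q+d)) + Fu*Q - Fe)
     = w*((Fe + Fu*d)*(ln((Fe/Fu + d)/(P+d)) - ln((Fe/Fu+d)/(Q+d))) + Fu*P - Fu*Q)"
    by (simp add: algebra_simps)
  also have "... = Fu*(w*((Fe/Fu + d)*ln((Q+d)/(P+d)) + P - Q))"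
    unfolding l m by (simp add: algebra_simps)
  finally show ?thesis .
qed

theorem lemma4p6:
  fixes V :: "'v set" and A :: "('v \<times> 'v) set" and X :: "'v set" and r :: 'v
    and \<omega> \<theta> :: "'v \<times> 'v \<Rightarrow> real" and \<kappa> :: real
    and q p P F :: "'v \<times> 'v \<Rightarrow> real" and c :: "'v \<Rightarrow> real"
  assumes "dag V A X r"
    and "marked V A X \<omega> \<theta>"
    and "\<kappa> > 0"
    and "in_Q V A X q"
    and "\<forall>x\<in>X. 0 \<le> c x"
    and "step_output V A X \<omega> \<theta> \<kappa> q c p"
    and "is_Lambda V A X r p P"
    and "unit_flow V A X r F"
  shows "glob_div A X \<omega> \<theta> \<kappa> F p - glob_div A X \<omega> \<theta> \<kappa> F q
           \<le> (\<Sum>x\<in>X. c x * (flow_val A X F x - flow_val A X P x))"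
proof -
  note dg = assms(1) and f = dag_facts[OF assms(1)]
  have mk: "\<forall>e\<in>A. 0 < \<omega> e" "\<forall>e\<in>A. 0 < \<theta> e" "\<forall>u \<in> V - X. outsum A \<theta> u = 1"
    using assms(2) unfolding marked_def by auto
  have qQ: "\<forall>e\<in>A. 0 \<le> q e" using assms(4) unfolding in_Q_def by auto
  obtain ch where chc: "\<forall>x\<in>X. ch x = c x" and
    stp: "\<forall>u \<in> V - X.
           (\<lambda>v. p (u, v)) \<in> simplex_at A u \<and>
           (\<forall>p' \<in> simplex_at A u.
              local_div A \<omega> \<theta> \<kappa> u (\<lambda>v. p (u, v)) (\<lambda>v. q (u, v))
                + (\<Sum>v\<in>{v. (u, v) \<in> A}. p (u, v) * ch v)
              \<le> local_div A \<omega> \<theta> \<kappa> u p' (\<lambda>v. q (u, v))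
                + (\<Sum>v\<in>{v. (u, v) \<in> A}. p' v * ch v)) \<and>
           ch u = (\<Sum>v\<in>{v. (u, v) \<in> A}. p (u, v) * ch v)"
    and pQ: "in_Q V A X p"
    using assms(6) unfolding step_output_def by blast
  have p0: "\<forall>e\<in>A. 0 \<le> p e" using pQ unfolding in_Q_def by auto
  have th1: "\<And>e. e \<in> A \<Longrightarrow> \<theta> e \<le> 1"
  proof -
    fix e assume e: "e \<in> A"
    obtain u v where uv: "e = (u,v)" by force
    have u: "u \<in> V - X" using f(8) e uv by auto
    have "\<theta> (u,v) \<le> (\<Sum>w\<in>{w. (u,w)\<in>A}. \<theta> (u,w))"
      by (rule member_le_sum) (use e uv mk(2) f(9) in \<open>auto intro: less_imp_le\<close>)
    thus "\<theta> e \<le> 1" using mk(3) u uv by (simp add: outsum_def)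
  qed
  have eta_pos: "\<And>e. e \<in> A \<Longrightarrow> eta \<theta> e > 0"
  proof -
    fix e assume e: "e \<in> A"
    have "1 / \<theta> e \<ge> 1" using th1[OF e] mk(2) e by simp
    hence "ln (1 / \<theta> e) \<ge> 0" by simp
    thus "eta \<theta> e > 0" by (simp add: eta_def)
  qed
  have dlt_pos: "\<And>e. e \<in> A \<Longrightarrow> dlt \<theta> e > 0"
    using eta_pos mk(2) by (simp add: dlt_def)
  define T where "T s e = (let Fu = flow_val A X F (fst e) in
      if Fu = 0 then 0 else
        \<omega> e / eta \<theta> e *
          ((F e + Fu * dlt \<theta> e) * ln ((F e / Fu + dlt \<theta> e) / (s e + dlt \<theta> e))
           + Fu * s e - F e))" for s e
  have gd: "\<And>s. glob_div A X \<omega> \<theta> \<kappa> F s = (1/\<kappa>) * (\<Sum>e\<in>A. T s e)"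
    unfolding glob_div_def T_def by simp
  have F0: "\<forall>e\<in>A. 0 \<le> F e" using assms(8) unfolding unit_flow_def is_flow_def by auto
  have per_u: "(1/\<kappa>) * (\<Sum>v\<in>{v. (u,v)\<in>A}. T p (u,v) - T q (u,v))
      \<le> (\<Sum>v\<in>{v. (u,v)\<in>A}. F (u,v) * ch v) - outsum A F u * ch u" if u: "u \<in> V - X" for u
  proof -
    define S where "S = {v. (u,v)\<in>A}"
    have finS: "finite S" using f(9) by (simp add: S_def)
    have fv: "flow_val A X F u = outsum A F u" using u by (simp add: flow_val_def)
    have osum: "outsum A F u = (\<Sum>v\<in>S. F (u,v))" by (simp add: outsum_def S_def)
    show ?thesis
    proof (cases "outsum A F u = 0")
      case True
      have z: "\<forall>v\<in>S. F (u,v) = 0"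
        using True osum sum_nonneg_eq_0_iff[OF finS, of "\<lambda>v. F (u,v)"] F0 by (auto simp: S_def)
      have "\<And>v. v \<in> S \<Longrightarrow> T p (u,v) - T q (u,v) = 0" by (simp add: T_def fv True)
      hence l: "(\<Sum>v\<in>S. T p (u,v) - T q (u,v)) = 0" by simp
      have r: "(\<Sum>v\<in>S. F (u,v) * ch v) = 0" using z by simp
      show ?thesis using l r True by (simp add: S_def[symmetric])
    next
      case False
      define Fu where "Fu = outsum A F u"
      have Fupos: "Fu > 0" using False osum F0 sum_nonneg[of S "\<lambda>v. F (u,v)"]
        by (force simp: Fu_def S_def)
      define fr where "fr v = F (u,v) / Fu" for v
      define W where "W v = \<omega> (u,v) / eta \<theta> (u,v)" for v
      define D where "D v = dlt \<theta> (u,v)" for v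
      have arc: "T p (u,v) - T q (u,v) = Fu * (W v * ((fr v + D v) * ln ((q (u,v) + D v) / (p (u,v) + D v)) + p (u,v) - q (u,v)))"
        if v: "v \<in> S" for v
      proof -
        have e: "(u,v) \<in> A" using v by (simp add: S_def)
        have "T p (u,v) - T q (u,v) = W v * ((F (u,v) + Fu * D v) * ln ((F (u,v) / Fu + D v) / (p (u,v) + D v)) + Fu * p (u,v) - F (u,v))
           - W v * ((F (u,v) + Fu * D v) * ln ((F (u,v) / Fu + D v) / (q (u,v) + D v)) + Fu * q (u,v) - F (u,v))"
          using False by (simp add: T_def fv Fu_def W_def D_def Let_def)
        also have "... = Fu * (W v * ((fr v + D v) * ln ((q (u,v) + D v) / (p (u,v) + D v)) + p (u,v) - q (u,v)))"
          unfolding fr_def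
          by (rule arc_alg) (use Fupos F0 e dlt_pos[OF e] p0 qQ in \<open>auto simp: D_def intro: add_nonneg_pos\<close>)
        finally show ?thesis .
      qed
      have lb: "(1/\<kappa>) * (\<Sum>v\<in>S. W v * ((fr v + D v) * ln ((q (u,v) + D v) / (p (u,v) + D v)) + p (u,v) - q (u,v)))
         \<le> (\<Sum>v\<in>S. fr v * ch v) - (\<Sum>v\<in>S. p (u,v) * ch v)"
      proof (rule local_bound[where Q = "\<lambda>v. q (u,v)" and P = "\<lambda>v. p (u,v)"])
        show "finite S" by (rule finS)
        show "\<kappa> > 0" by (rule assms(3))
        show "\<forall>v\<in>S. W v > 0" using mk(1) eta_pos by (auto simp: W_def S_def)
        show "\<forall>v\<in>S. D v > 0" using dlt_pos by (auto simp: D_def S_def)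
        show "\<forall>v\<in>S. p (u,v) \<ge> 0" using p0 by (auto simp: S_def)
        show "\<forall>v\<in>S. q (u,v) \<ge> 0" using qQ by (auto simp: S_def)
        show "\<forall>v\<in>S. fr v \<ge> 0" using F0 Fupos by (auto simp: S_def fr_def)
        show "(\<Sum>v\<in>S. p (u,v)) = 1" using pQ u by (simp add: in_Q_def outsum_def S_def)
        show "sum fr S = 1" using Fupos osum by (simp add: fr_def Fu_def sum_divide_distrib[symmetric])
        show "\<forall>x. (\<forall>v\<in>S. 0 \<le> x v) \<longrightarrow> sum x S = 1 \<longrightarrow>
          1 / \<kappa> * (\<Sum>v\<in>S. W v * ((p (u,v) + D v) * ln ((p (u,v) + D v) / (q (u,v) + D v)) + q (u,v) - p (u,v))) +
          (\<Sum>v\<in>S. p (u,v) * ch v)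
          \<le> 1 / \<kappa> * (\<Sum>v\<in>S. W v * ((x v + D v) * ln ((x v + D v) / (q (u,v) + D v)) + q (u,v) - x v)) +
             (\<Sum>v\<in>S. x v * ch v)"
        proof (intro allI impI)
          fix x :: "'v \<Rightarrow> real" assume x: "\<forall>v\<in>S. 0 \<le> x v" "sum x S = 1"
          have "x \<in> simplex_at A u" using x by (auto simp: simplex_at_def S_def)
          with stp u show "1 / \<kappa> * (\<Sum>v\<in>S. W v * ((p (u,v) + D v) * ln ((p (u,v) + D v) / (q (u,v) + D v)) + q (u,v) - p (u,v))) +
          (\<Sum>v\<in>S. p (u,v) * ch v)
          \<le> 1 / \<kappa> * (\<Sum>v\<in>S. W v * ((x v + D v) * ln ((x v + D v) / (q (u,v) + D v)) + q (u,v) - x v)) +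
             (\<Sum>v\<in>S. x v * ch v)"
            by (auto simp: local_div_def S_def W_def D_def)
        qed
      qed
      have chu: "ch u = (\<Sum>v\<in>S. p (u,v) * ch v)" using stp u by (simp add: S_def)
      have "(1/\<kappa>) * (\<Sum>v\<in>S. T p (u,v) - T q (u,v))
          = Fu * ((1/\<kappa>) * (\<Sum>v\<in>S. W v * ((fr v + D v) * ln ((q (u,v) + D v) / (p (u,v) + D v)) + p (u,v) - q (u,v))))"
        by (simp add: arc sum_distrib_left[symmetric])
      also have "... \<le> Fu * ((\<Sum>v\<in>S. fr v * ch v) - (\<Sum>v\<in>S. p (u,v) * ch v))"
        using mult_left_mono[OF lb] Fupos by simp
      also have "... = (\<Sum>v\<in>S. F (u,v) * ch v) - Fu * ch u"
        using Fupos by (simp add: chu fr_def right_diff_distrib sum_distrib_left)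
      finally show ?thesis by (simp add: S_def Fu_def)
    qed
  qed
  have "glob_div A X \<omega> \<theta> \<kappa> F p - glob_div A X \<omega> \<theta> \<kappa> F q
      = (\<Sum>u\<in>V-X. (1/\<kappa>) * (\<Sum>v\<in>{v. (u,v)\<in>A}. T p (u,v) - T q (u,v)))"
    unfolding gd by (simp add: right_diff_distrib[symmetric] sum_subtractf[symmetric] sum_A_out[OF dg] sum_distrib_left diff_divide_distrib)
  also have "... \<le> (\<Sum>u\<in>V-X. (\<Sum>v\<in>{v. (u,v)\<in>A}. F (u,v) * ch v) - outsum A F u * ch u)"
    by (rule sum_mono) (rule per_u)
  also have "... = (\<Sum>x\<in>X. c x * insum A F x) - ch r"
    by (rule telescope[OF dg assms(8) chc])
  finally have main: "glob_div A X \<omega> \<theta> \<kappa> F p - glob_div A X \<omega> \<theta> \<kappa> F q \<le> (\<Sum>x\<in>X. c x * insum A F x) - ch r" .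
  have Pl: "unit_flow V A X r P" "\<forall>u v. (u, v) \<in> A \<longrightarrow> P (u, v) = flow_val A X P u * p (u, v)"
    using assms(7) unfolding is_Lambda_def by auto
  have "(\<Sum>u\<in>V-X. (\<Sum>v\<in>{v. (u,v)\<in>A}. P (u,v) * ch v) - outsum A P u * ch u) = 0"
  proof (rule sum.neutral, rule ballI)
    fix u assume u: "u \<in> V - X"
    have "(\<Sum>v\<in>{v. (u,v)\<in>A}. P (u,v) * ch v) = (\<Sum>v\<in>{v. (u,v)\<in>A}. outsum A P u * (p (u,v) * ch v))"
      by (rule sum.cong) (use Pl(2) u in \<open>auto simp: flow_val_def\<close>)
    also have "... = outsum A P u * ch u" using stp u by (simp add: sum_distrib_left[symmetric])
    finally show "(\<Sum>v\<in>{v. (u,v)\<in>A}. P (u,v) * ch v) - outsum A P u * ch u = 0" by simp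
  qed
  hence Pr: "(\<Sum>x\<in>X. c x * insum A P x) = ch r" using telescope[OF dg Pl(1) chc] by simp
  have "(\<Sum>x\<in>X. c x * (flow_val A X F x - flow_val A X P x)) = (\<Sum>x\<in>X. c x * insum A F x) - (\<Sum>x\<in>X. c x * insum A P x)"
    by (simp add: flow_val_def right_diff_distrib sum_subtractf)
  with main Pr show ?thesis by simp
qed

end
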